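(* Let $P,R_A,R_B>0$, $q>0$, $\mathbf{w}\in\mathbb{R}^n_{++}$ with $W=\sum_b w_b$. Suppose $\mathbf{p}\in\Delta_n(P)$ satisfies $$qR_B-P>\frac{R_A}{2}\left[1+\sqrt{1+\frac{2W}{R_A}\max_{b}\frac{p_b}{w_b}}\right].$$ Then $\pi_A(\mathbf{p},R_A,R_B)=\dfrac{W R_A}{2(qR_B-P)}$; in particular this value does not depend on $\mathbf{p}$. Moreover, if some $\mathbf{p}\in\Delta_n(P)$ satisfies the displayed inequality, then so does $\mathbf{p}^*=\frac{P}{W}\mathbf{w}$.
   Context: **Battlefields.** There are $n$ battlefields $\mathcal{B}=\{1,\dots,n\}$. Battlefield $b$ has value $w_b>0$, common to both players, and $W=\sum_b w_b$. **Pre-allocation.** Player $A$ fixes a pre-allocation $\mathbf{p}\in\Delta_n(P):=\{\mathbf{p}\in\mathbb{R}^n_+:\sum_b p_b=P\}$. **Stage-2 game.** Players $A$ and $B$ have real-time budgets $R_A$ and $R_B$. The constant $q>0$ is the effectiveness of $B$'s resources relative to $A$'s. Each player $i\in\{A,B\}$ simultaneously chooses a distribution $F_i$ over allocations $\mathbf{x}_i\in\mathbb{R}^n_+$ with $\mathbb{E}[\sum_b x_{i,b}]\le R_i$. Player $A$ wins battlefield $b$ if $x_{A,b}+p_b>q\,x_{B,b}$; otherwise $B$ wins it. The tie-breaking rule is arbitrary. $A$'s payoff is the expected total value won, and $B$'s payoff is $W$ minus this. **Equilibrium payoff.** The game has unique equilibrium payoffs. $A$'s equilibrium payoff is denoted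 $\pi_A(\mathbf{p},R_A,R_B)$. *)

theory Defs
  imports "HOL-Probability.Probability"
begin

definition preAlloc :: "real \<Rightarrow> (real^'n) set" where
  "preAlloc P = {p. (\<forall>b. p$b \<ge> 0) \<and> (\<Sum>b\<in>UNIV. p$b) = P}"

definition feasible :: "real \<Rightarrow> (real^'n) measure \<Rightarrow> bool" where
  "feasible R F \<longleftrightarrow> prob_space F \<and> sets F = sets borel \<and>
     (AE x in F. \<forall>b. x$b \<ge> 0) \<and>
     (\<integral>\<^sup>+ x. ennreal (\<Sum>b\<in>UNIV. x$b) \<partial>F) \<le> ennreal R"

definition payoffA :: "real^'n \<Rightarrow> real \<Rightarrow> real^'n \<Rightarrow> (real^'n) measure \<Rightarrow> (real^'n) measure \<Rightarrow> real" where
  "payoffA w q p FA FB =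
     (\<integral> xy. (\<Sum>b\<in>UNIV. if (fst xy)$b + p$b > q * (snd xy)$b then w$b else 0) \<partial>(FA \<Otimes>\<^sub>M FB))"

definition is_equilibrium :: "real^'n \<Rightarrow> real \<Rightarrow> real^'n \<Rightarrow> real \<Rightarrow> real \<Rightarrow>
    (real^'n) measure \<Rightarrow> (real^'n) measure \<Rightarrow> bool" where
  "is_equilibrium w q p RA RB FA FB \<longleftrightarrow>
     feasible RA FA \<and> feasible RB FB \<and>
     (\<forall>FA'. feasible RA FA' \<longrightarrow> payoffA w q p FA' FB \<le> payoffA w q p FA FB) \<and>
     (\<forall>FB'. feasible RB FB' \<longrightarrow> payoffA w q p FA FB' \<ge> payoffA w q p FA FB)"

text \<open>Equilibrium payoff of A (the game has unique equilibrium payoffs).\<close>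
definition piA :: "real^'n \<Rightarrow> real \<Rightarrow> real^'n \<Rightarrow> real \<Rightarrow> real \<Rightarrow> real" where
  "piA w q p RA RB = (THE v. \<exists>FA FB. is_equilibrium w q p RA RB FA FB \<and> v = payoffA w q p FA FB)"

definition cond_ineq :: "real^'n \<Rightarrow> real \<Rightarrow> real \<Rightarrow> real \<Rightarrow> real \<Rightarrow> real^'n \<Rightarrow> bool" where
  "cond_ineq w q P RA RB p \<longleftrightarrow>
     q * RB - P > RA / 2 * (1 + sqrt (1 + 2 * (\<Sum>b\<in>UNIV. w$b) / RA * (MAX b. p$b / w$b)))"

end

theory Submission
  imports Defs
begin


abbreviation U :: "real measure" where "U \<equiv> uniform_measure lborel {0..1}"

lemma U_prob: "prob_space U"
  by (rule prob_space_uniform_measure) auto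

lemma U_measure: "B \<in> sets borel \<Longrightarrow> measure U B = measure lborel ({0..1} \<inter> B)"
  by (subst measure_uniform_measure) auto

lemma U_le: "measure U {..<a} \<le> max 0 a" "measure U {..a} \<le> max 0 a"
proof -
  have f: "{0..max 0 a} \<in> fmeasurable lborel" by (metis cbox_interval fmeasurable_cbox)
  have "measure lborel ({0..1} \<inter> {..<a}) \<le> measure lborel {0..max 0 a}"
    by (rule measure_mono_fmeasurable[OF _ _ f]) auto
  then show "measure U {..<a} \<le> max 0 a" by (simp add: U_measure)
  have "measure lborel ({0..1} \<inter> {..a}) \<le> measure lborel {0..max 0 a}"
    by (rule measure_mono_fmeasurable[OF _ _ f]) auto
  then show "measure U {..a} \<le> max 0 a" by (simp add: U_measure)
qed

lemma vec_nth_meas[measurable]: "(\<lambda>x::real^'n. x $ b) \<in> borel_measurable borel"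
  by (intro borel_measurable_continuous_onI continuous_intros)

lemma meas_test:
  fixes w p :: "real^'n" and q :: real
  shows "(\<lambda>xy. (\<Sum>b\<in>UNIV. if (fst xy)$b + p$b > q * (snd xy)$b then w$b else 0)) \<in> borel_measurable (borel \<Otimes>\<^sub>M borel :: ((real^'n) \<times> (real^'n)) measure)"
  by measurable

lemma feasible_int:
  assumes "feasible R F" "R \<ge> 0"
  shows "integrable F (\<lambda>x. \<Sum>b\<in>UNIV. x$b)" "(\<integral>x. (\<Sum>b\<in>UNIV. x$b) \<partial>F) \<le> R"
proof -
  have F: "prob_space F" "sets F = sets borel" "AE x in F. \<forall>b. x$b \<ge> 0"
    "(\<integral>\<^sup>+ x. ennreal (\<Sum>b\<in>UNIV. x$b) \<partial>F) \<le> ennreal R"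
    using assms unfolding feasible_def by auto
  have meas: "(\<lambda>x::real^'a. \<Sum>b\<in>UNIV. x$b) \<in> borel_measurable F"
    unfolding measurable_cong_sets[OF F(2) refl] by measurable
  have ae: "AE x in F. 0 \<le> (\<Sum>b\<in>UNIV. x$b)"
    using F(3) by eventually_elim (simp add: sum_nonneg)
  have "(\<integral>\<^sup>+ x. ennreal (norm (\<Sum>b\<in>UNIV. x$b)) \<partial>F) = (\<integral>\<^sup>+ x. ennreal (\<Sum>b\<in>UNIV. x$b) \<partial>F)"
    using ae by (auto intro!: nn_integral_cong_AE elim!: eventually_mono)
  also have "\<dots> < \<infinity>" using F(4) by (simp add: le_less_trans)
  finally show "integrable F (\<lambda>x. \<Sum>b\<in>UNIV. x$b)"
    by (intro integrableI_bounded meas)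
  have "(\<integral>x. (\<Sum>b\<in>UNIV. x$b) \<partial>F) = enn2real (\<integral>\<^sup>+ x. ennreal (\<Sum>b\<in>UNIV. x$b) \<partial>F)"
    by (rule integral_eq_nn_integral[OF meas ae])
  also have "\<dots> \<le> enn2real (ennreal R)"
    using F(4) by (intro enn2real_mono) auto
  finally show "(\<integral>x. (\<Sum>b\<in>UNIV. x$b) \<partial>F) \<le> R" using assms(2) by simp
qed

definition fw :: "real^'n \<Rightarrow> real \<Rightarrow> real^'n \<Rightarrow> real^'n \<Rightarrow> real^'n \<Rightarrow> real" where
  "fw w q p x y = (\<Sum>b\<in>UNIV. if x$b + p$b > q * y$b then w$b else 0)"

lemma fw_meas[measurable]: "(\<lambda>xy. fw w q p (fst xy) (snd xy)) \<in> borel_measurable (borel \<Otimes>\<^sub>M borel)"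
  unfolding fw_def by measurable

lemma payoff_fubini:
  assumes "feasible RA FA" "feasible RB FB"
  shows "payoffA w q p FA FB = (\<integral>x. (\<integral>y. fw w q p x y \<partial>FB) \<partial>FA)"
    "payoffA w q p FA FB = (\<integral>y. (\<integral>x. fw w q p x y \<partial>FA) \<partial>FB)"
    "integrable FA (\<lambda>x. \<integral>y. fw w q p x y \<partial>FB)"
    "integrable FB (\<lambda>y. \<integral>x. fw w q p x y \<partial>FA)"
proof -
  have A: "prob_space FA" "sets FA = sets borel" and B: "prob_space FB" "sets FB = sets borel"
    using assms unfolding feasible_def by auto
  interpret pair_prob_space FA FB using A B by (simp add: pair_prob_space_def pair_sigma_finite_def prob_space_imp_sigma_finite)
  have s: "sets (FA \<Otimes>\<^sub>M FB) = sets (borel \<Otimes>\<^sub>M borel)"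
    by (rule sets_pair_measure_cong[OF A(2) B(2)])
  have meas: "(\<lambda>xy. fw w q p (fst xy) (snd xy)) \<in> borel_measurable (FA \<Otimes>\<^sub>M FB)"
    unfolding measurable_cong_sets[OF s refl] by measurable
  have int: "integrable (FA \<Otimes>\<^sub>M FB) (\<lambda>xy. fw w q p (fst xy) (snd xy))"
  proof (rule integrable_const_bound[where B="\<Sum>b\<in>UNIV. \<bar>w$b\<bar>"])
    show "AE xy in FA \<Otimes>\<^sub>M FB. norm (fw w q p (fst xy) (snd xy)) \<le> (\<Sum>b\<in>UNIV. \<bar>w$b\<bar>)"
      unfolding fw_def by (intro AE_I2 order.trans[OF norm_sum] sum_mono) auto
  qed (rule meas)
  have int': "integrable (FA \<Otimes>\<^sub>M FB) (case_prod (fw w q p))"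
    using int by (simp add: case_prod_beta')
  have eq: "payoffA w q p FA FB = integral\<^sup>L (FA \<Otimes>\<^sub>M FB) (case_prod (fw w q p))"
    unfolding payoffA_def fw_def by (simp add: case_prod_beta')
  show "payoffA w q p FA FB = (\<integral>x. (\<integral>y. fw w q p x y \<partial>FB) \<partial>FA)"
    using integral_fst[OF int'] eq by simp
  show "payoffA w q p FA FB = (\<integral>y. (\<integral>x. fw w q p x y \<partial>FA) \<partial>FB)"
    using integral_snd[OF int'] eq by simp
  show "integrable FA (\<lambda>x. \<integral>y. fw w q p x y \<partial>FB)" using integrable_fst[OF int'] .
  show "integrable FB (\<lambda>y. \<integral>x. fw w q p x y \<partial>FA)" using integrable_snd[OF int'] .
qed


lemma U_nn:
  fixes f :: "real \<Rightarrow> real"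
  assumes [measurable]: "f \<in> borel_measurable borel" and nn: "\<And>t. t \<in> {0..1} \<Longrightarrow> 0 \<le> f t"
    and I: "(f has_integral I) {0..1}"
  shows "(\<integral>\<^sup>+t. ennreal (f t) \<partial>U) = ennreal I"
proof -
  have "(\<integral>\<^sup>+t. ennreal (f t) \<partial>U) = (\<integral>\<^sup>+t. ennreal (f t) * indicator {0..1} t \<partial>lborel) / emeasure lborel {0..1::real}"
    by (rule nn_integral_uniform_measure) auto
  also have "\<dots> = ennreal I"
    using nn_integral_has_integral_lebesgue'[OF nn I] by (simp add: divide_ennreal_def)
  finally show ?thesis .
qed

lemma intB:
  fixes P D q :: real assumes "q > 0"
  shows "((\<lambda>t. (P + 2*D*t)/q) has_integral (P + D)/q) {0..1}"
proof -
  have "((\<lambda>t. (P + 2*D*t)/q) has_integral ((\<lambda>t. (P*t + D*(t*t))/q) 1 - (\<lambda>t. (P*t + D*(t*t))/q) 0)) {0..1}"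
    using assms by (intro fundamental_theorem_of_calculus) (auto simp: has_real_derivative_iff_has_vector_derivative[symmetric] field_simps intro!: derivative_eq_intros)
  then show ?thesis by simp
qed

lemma intA:
  fixes D c :: real assumes "0 < c" "c < 1"
  shows "((\<lambda>s. (2*D/c) * max 0 (s - (1-c))) has_integral D*c) {0..1}"
proof -
  have 1: "((\<lambda>s. (2*D/c) * max 0 (s - (1-c))) has_integral 0) {0..1-c}"
    by (rule has_integral_eq[OF _ has_integral_0]) auto
  have "((\<lambda>s. (2*D/c) * (s - (1-c))) has_integral ((\<lambda>s. (D/c) * ((s - (1-c))*(s - (1-c)))) 1 - (\<lambda>s. (D/c) * ((s - (1-c))*(s - (1-c)))) (1-c))) {1-c..1}"
    using assms by (intro fundamental_theorem_of_calculus) (auto simp: has_real_derivative_iff_has_vector_derivative[symmetric] field_simps intro!: derivative_eq_intros)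
  then have "((\<lambda>s. (2*D/c) * (s - (1-c))) has_integral D*c) {1-c..1}"
    using assms by (simp add: power2_eq_square field_simps)
  then have 2: "((\<lambda>s. (2*D/c) * max 0 (s - (1-c))) has_integral D*c) {1-c..1}"
    by (rule has_integral_eq[rotated]) auto
  show ?thesis using has_integral_combine[OF _ _ 1 2] assms by simp
qed



definition vb :: "real^'n \<Rightarrow> real \<Rightarrow> 'n \<Rightarrow> real" where
  "vb w D b = D * w$b / (\<Sum>b\<in>UNIV. w$b)"
definition yv :: "real^'n \<Rightarrow> real \<Rightarrow> real^'n \<Rightarrow> real \<Rightarrow> real \<Rightarrow> real^'n" where
  "yv w q p D t = (\<chi> b. (p$b + 2 * vb w D b * t)/q)"
definition xv :: "real^'n \<Rightarrow> real \<Rightarrow> real \<Rightarrow> real \<Rightarrow> real^'n" where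
  "xv w D c s = (\<chi> b. (2 * vb w D b / c) * max 0 (s - (1-c)))"
definition stratB :: "real^'n \<Rightarrow> real \<Rightarrow> real^'n \<Rightarrow> real \<Rightarrow> (real^'n) measure" where
  "stratB w q p D = distr U borel (yv w q p D)"
definition stratA :: "real^'n \<Rightarrow> real \<Rightarrow> real \<Rightarrow> (real^'n) measure" where
  "stratA w D c = distr U borel (xv w D c)"

lemma yv_meas[measurable]: "yv w q p D \<in> borel_measurable borel"
  unfolding yv_def divide_inverse by (intro borel_measurable_continuous_onI continuous_intros)
lemma xv_meas[measurable]: "xv w D c \<in> borel_measurable borel"
  unfolding xv_def by (intro borel_measurable_continuous_onI continuous_intros)

lemma sum_vb: assumes "\<forall>b. w$b > 0" shows "(\<Sum>b\<in>UNIV. vb w D b) = D"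
proof -
  have "(\<Sum>b\<in>UNIV. w$b) > 0" using assms by (intro sum_pos) auto
  then show ?thesis unfolding vb_def by (simp add: sum_divide_distrib[symmetric] sum_distrib_left[symmetric])
qed

lemma vb_pos: assumes "\<forall>b. w$b > 0" "D > 0" shows "vb w D b > 0"
proof -
  have "(\<Sum>b\<in>UNIV. w$b) > 0" using assms by (intro sum_pos) auto
  then show ?thesis using assms unfolding vb_def by auto
qed

lemma feasible_B:
  assumes "q > 0" "\<forall>b. p$b \<ge> 0" "(\<Sum>b\<in>UNIV. p$b) = P" "D = q*RB - P" "D > 0" "\<forall>b. w$b > 0"
  shows "feasible RB (stratB w q p D)"
  unfolding feasible_def stratB_def
proof (intro conjI)
  show "prob_space (distr U borel (yv w q p D))"
    by (intro prob_space.prob_space_distr U_prob) measurable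
  show "sets (distr U borel (yv w q p D)) = sets borel" by simp
  have "AE t in U. \<forall>b. yv w q p D t $ b \<ge> 0"
    using assms vb_pos[OF assms(6,5)]
    by (intro AE_uniform_measureI AE_I2) (auto simp: yv_def less_imp_le intro!: divide_nonneg_nonneg add_nonneg_nonneg mult_nonneg_nonneg)
  then show "AE x in distr U borel (yv w q p D). \<forall>b. x $ b \<ge> 0"
    by (subst AE_distr_iff) auto
  have "(\<integral>\<^sup>+ x. ennreal (\<Sum>b\<in>UNIV. x$b) \<partial>distr U borel (yv w q p D))
        = (\<integral>\<^sup>+ t. ennreal (\<Sum>b\<in>UNIV. yv w q p D t $b) \<partial>U)"
    by (subst nn_integral_distr) auto
  also have "\<dots> = (\<integral>\<^sup>+ t. ennreal ((P + 2*D*t)/q) \<partial>U)"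
  proof (intro nn_integral_cong arg_cong[where f=ennreal])
    fix t
    have "(\<Sum>b\<in>UNIV. yv w q p D t $b) = ((\<Sum>b\<in>UNIV. p$b) + 2*t*(\<Sum>b\<in>UNIV. vb w D b))/q"
      unfolding yv_def by (simp add: sum_divide_distrib[symmetric] sum.distrib sum_distrib_left algebra_simps)
    then show "(\<Sum>b\<in>UNIV. yv w q p D t $b) = (P + 2*D*t)/q"
      using sum_vb[OF assms(6)] assms(3) by simp
  qed
  also have "\<dots> = ennreal ((P + D)/q)"
  proof (intro U_nn intB)
    have "P \<ge> 0" using assms(2,3) by (metis sum_nonneg)
    then show "0 \<le> (P + 2*D*t)/q" if "t \<in> {0..1}" for t
      using that assms(1,5) by (intro divide_nonneg_pos add_nonneg_nonneg mult_nonneg_nonneg) auto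
  qed (use assms in auto)
  also have "(P + D)/q = RB" using assms by (simp add: field_simps)
  finally show "(\<integral>\<^sup>+ x. ennreal (\<Sum>b\<in>UNIV. x$b) \<partial>distr U borel (yv w q p D)) \<le> ennreal RB" by simp
qed

lemma feasible_A:
  assumes "0 < c" "c < 1" "D > 0" "\<forall>b. w$b > 0" "RA = D*c"
  shows "feasible RA (stratA w D c)"
  unfolding feasible_def stratA_def
proof (intro conjI)
  show "prob_space (distr U borel (xv w D c))"
    by (intro prob_space.prob_space_distr U_prob) measurable
  show "sets (distr U borel (xv w D c)) = sets borel" by simp
  have "\<forall>b. xv w D c t $ b \<ge> 0" for t
    using assms vb_pos[OF assms(4,3)] by (auto simp: xv_def less_imp_le intro!: divide_nonneg_nonneg mult_nonneg_nonneg)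
  then show "AE x in distr U borel (xv w D c). \<forall>b. x $ b \<ge> 0"
    by (subst AE_distr_iff) auto
  have "(\<integral>\<^sup>+ x. ennreal (\<Sum>b\<in>UNIV. x$b) \<partial>distr U borel (xv w D c))
        = (\<integral>\<^sup>+ t. ennreal (\<Sum>b\<in>UNIV. xv w D c t $b) \<partial>U)"
    by (subst nn_integral_distr) auto
  also have "\<dots> = (\<integral>\<^sup>+ s. ennreal ((2*D/c) * max 0 (s - (1-c))) \<partial>U)"
  proof (intro nn_integral_cong arg_cong[where f=ennreal])
    fix s
    have "(\<Sum>b\<in>UNIV. xv w D c s $b) = (2*(\<Sum>b\<in>UNIV. vb w D b)/c) * max 0 (s - (1-c))"
      unfolding xv_def by (simp add: sum_divide_distrib[symmetric] sum_distrib_left sum_distrib_right)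
    then show "(\<Sum>b\<in>UNIV. xv w D c s $b) = (2*D/c) * max 0 (s - (1-c))"
      using sum_vb[OF assms(4)] by simp
  qed
  also have "\<dots> = ennreal (D*c)"
    using assms by (intro U_nn intA) auto
  finally show "(\<integral>\<^sup>+ x. ennreal (\<Sum>b\<in>UNIV. x$b) \<partial>distr U borel (xv w D c)) \<le> ennreal RA" using assms by simp
qed



lemma fw_meas2: "fw w q p x \<in> borel_measurable borel"
  unfolding fw_def by measurable
lemma fw_meas3: "(\<lambda>x. fw w q p x y) \<in> borel_measurable borel"
  unfolding fw_def by measurable

lemma U_sum_ind:
  assumes "\<And>b. A b \<in> sets borel"
  shows "(\<integral>t. (\<Sum>b\<in>UNIV. (w::real^'n)$b * indicator (A b) t) \<partial>U) = (\<Sum>b\<in>UNIV. w$b * measure U (A b))"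
proof -
  interpret prob_space U by (rule U_prob)
  have "(\<integral>t. (\<Sum>b\<in>UNIV. w$b * indicator (A b) t) \<partial>U) = (\<Sum>b\<in>UNIV. (\<integral>t. w$b * indicator (A b) t \<partial>U))"
  proof (intro Bochner_Integration.integral_sum integrable_mult_right integrable_real_indicator)
    fix b show "A b \<in> sets U" using assms by simp
    have "emeasure U (A b) \<noteq> \<top>" by (rule emeasure_finite)
    then show "emeasure U (A b) < \<infinity>" unfolding infinity_ennreal_def by (rule less_top[THEN iffD1])
  qed
  also have "\<dots> = (\<Sum>b\<in>UNIV. w$b * measure U (A b))"
    by (simp del: emeasure_uniform_measure measure_uniform_measure)
  finally show ?thesis .
qed

lemma innerB:
  assumes "q > 0" "D > 0" "\<forall>b. w$b > 0"
  shows "(\<integral>y. fw w q p x y \<partial>stratB w q p D) = (\<Sum>b\<in>UNIV. w$b * measure U {..< x$b / (2 * vb w D b)})"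
proof -
  have "(\<integral>y. fw w q p x y \<partial>stratB w q p D) = (\<integral>t. fw w q p x (yv w q p D t) \<partial>U)"
  proof -
    have m: "yv w q p D \<in> borel_measurable U" by measurable
    show ?thesis unfolding stratB_def by (rule integral_distr[OF m fw_meas2])
  qed
  also have "\<dots> = (\<integral>t. (\<Sum>b\<in>UNIV. w$b * indicator {..< x$b / (2 * vb w D b)} t) \<partial>U)"
    unfolding fw_def
  proof (intro Bochner_Integration.integral_cong refl sum.cong)
    fix t b
    have v: "vb w D b > 0" using vb_pos assms by blast
    have "(x$b + p$b > q * ((p$b + 2 * vb w D b * t)/q)) \<longleftrightarrow> t < x$b / (2 * vb w D b)"
    proof -
      have e: "q * ((p$b + 2 * vb w D b * t)/q) = p$b + 2 * vb w D b * t" using assms(1) by simp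
      have "(t < x$b / (2 * vb w D b)) = (t * (2 * vb w D b) < x$b)" using v by (simp add: pos_less_divide_eq)
      then show ?thesis unfolding e by (simp add: mult.commute)
    qed
    then show "(if x$b + p$b > q * yv w q p D t $ b then w$b else 0) = w$b * indicator {..< x$b / (2 * vb w D b)} t"
      by (simp add: yv_def indicator_def)
  qed
  also have "\<dots> = (\<Sum>b\<in>UNIV. w$b * measure U {..< x$b / (2 * vb w D b)})"
    by (rule U_sum_ind) auto
  finally show ?thesis .
qed

lemma innerA:
  assumes "q > 0" "D > 0" "\<forall>b. w$b > 0"
  shows "(\<integral>x. fw w q p x y \<partial>stratA w D c) = (\<Sum>b\<in>UNIV. w$b * measure U {s. (2 * vb w D b / c) * max 0 (s - (1-c)) + p$b > q * y$b})"
proof -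
  have "(\<integral>x. fw w q p x y \<partial>stratA w D c) = (\<integral>s. fw w q p (xv w D c s) y \<partial>U)"
  proof -
    have m: "xv w D c \<in> borel_measurable U" by measurable
    show ?thesis unfolding stratA_def by (rule integral_distr[OF m fw_meas3])
  qed
  also have "\<dots> = (\<integral>s. (\<Sum>b\<in>UNIV. w$b * indicator {s. (2 * vb w D b / c) * max 0 (s - (1-c)) + p$b > q * y$b} s) \<partial>U)"
    unfolding fw_def xv_def by (intro Bochner_Integration.integral_cong refl sum.cong) (simp add: indicator_def)
  also have "\<dots> = (\<Sum>b\<in>UNIV. w$b * measure U {s. (2 * vb w D b / c) * max 0 (s - (1-c)) + p$b > q * y$b})"
    by (rule U_sum_ind, rule borel_open, intro open_Collect_less continuous_intros)
  finally show ?thesis .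
qed



lemma meas_A_b:
  assumes "v > 0" "x \<ge> 0"
  shows "measure U {..<(x / (2 * v))} \<le> x / (2 * v)"
  using U_le(1)[of "x/(2 * v)"] assms by simp

lemma meas_B_b:
  assumes "v > 0" "0 < c" "c < 1" "c * p / (2 * v) \<le> 1 - c" "z \<ge> 0"
  shows "measure U {s. (2 * v/c) * max 0 (s - (1-c)) + p > z} \<ge> c * (1 - (z - p)/(2 * v))"
proof -
  interpret prob_space U by (rule U_prob)
  have S0: "{s. (2 * v/c) * max 0 (s - (1-c)) + p > z} \<in> sets borel"
    by (rule borel_open, intro open_Collect_less continuous_intros)
  then have S: "{s. (2 * v/c) * max 0 (s - (1-c)) + p > z} \<in> sets U" by simp
  show ?thesis
  proof (cases "z < p")
    case True
    have nn: "0 \<le> (2 * v/c) * max 0 (s - (1-c))" for s using assms by simp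
    have "{s. (2 * v/c) * max 0 (s - (1-c)) + p > z} = space U"
      proof (rule set_eqI)
      fix s show "s \<in> {s. (2 * v/c) * max 0 (s - (1-c)) + p > z} \<longleftrightarrow> s \<in> space U"
        using nn[of s] True by simp
    qed
    then have "measure U {s. (2 * v/c) * max 0 (s - (1-c)) + p > z} = 1" by simp
    moreover have "c * (1 - (z - p)/(2 * v)) = c + c * p / (2 * v) - c * z / (2 * v)"
      using assms by (simp add: field_simps)
    moreover have "c * z / (2 * v) \<ge> 0" using assms by simp
    ultimately show ?thesis using assms by linarith
  next
    case False
    define a where "a = 1 - c + c * (z - p) / (2 * v)"
    have a0: "a \<ge> 0" using False assms unfolding a_def by simp
    have sub: "{a<..} \<subseteq> {s. (2 * v/c) * max 0 (s - (1-c)) + p > z}"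
    proof
      fix s assume "s \<in> {a<..}"
      then have s: "s - (1-c) > c * (z - p) / (2 * v)" unfolding a_def by simp
      moreover have "c * (z - p) / (2 * v) \<ge> 0" using False assms by simp
      ultimately have m: "max 0 (s - (1-c)) = s - (1-c)" by simp
      have "(2 * v/c) * (c * (z - p) / (2 * v)) < (2 * v/c) * (s - (1-c))"
        using s assms by (intro mult_strict_left_mono) auto
      moreover have "(2 * v/c) * (c * (z - p) / (2 * v)) = z - p" using assms by (simp add: field_simps)
      ultimately have "z - p < (2 * v/c) * (s - (1-c))" by simp
      then show "s \<in> {s. (2 * v/c) * max 0 (s - (1-c)) + p > z}" using m by simp
    qed
    have "measure U {a<..} = 1 - measure U {..a}"
    proof -
      have "{a<..} = space U - {..a}" by auto
      then show ?thesis using prob_compl[of "{..a}"] by simp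
    qed
    also have "\<dots> \<ge> 1 - a" using U_le(2)[of a] a0 by simp
    finally have "measure U {a<..} \<ge> 1 - a" .
    moreover have "measure U {a<..} \<le> measure U {s. (2 * v/c) * max 0 (s - (1-c)) + p > z}"
      by (rule finite_measure_mono[OF sub S])
    moreover have "1 - a = c * (1 - (z - p)/(2 * v))" unfolding a_def using assms by (simp add: field_simps)
    ultimately show ?thesis by linarith
  qed
qed



lemma w_v: assumes "\<forall>b. w$b > 0" "D > 0"
  shows "w$b * (x / (2 * vb w D b)) = (\<Sum>b\<in>UNIV. w$b) / (2*D) * x"
proof -
  have W: "(\<Sum>b\<in>UNIV. w$b) > 0" using assms by (intro sum_pos) auto
  have wb: "w$b > 0" using assms by auto
  show ?thesis using W wb assms(2) unfolding vb_def by (simp add: field_simps)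
qed

lemma A_side:
  assumes q: "q > 0" "D > 0" "\<forall>b. w$b > 0" and fA: "feasible RA FA" "RA \<ge> 0"
    and fB: "feasible RB (stratB w q p D)"
  shows "payoffA w q p FA (stratB w q p D) \<le> (\<Sum>b\<in>UNIV. w$b) * RA / (2*D)"
proof -
  define K where "K = (\<Sum>b\<in>UNIV. w$b) / (2*D)"
  have K0: "K \<ge> 0" unfolding K_def using q by (intro divide_nonneg_pos sum_nonneg) (auto intro: less_imp_le)
  have pf: "payoffA w q p FA (stratB w q p D) = (\<integral>x. (\<integral>y. fw w q p x y \<partial>stratB w q p D) \<partial>FA)"
    by (rule payoff_fubini(1)[OF fA(1) fB])
  have int: "integrable FA (\<lambda>x. \<integral>y. fw w q p x y \<partial>stratB w q p D)"
    by (rule payoff_fubini(3)[OF fA(1) fB])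
  have ints: "integrable FA (\<lambda>x. K * (\<Sum>b\<in>UNIV. x$b))"
    using feasible_int(1)[OF fA] by simp
  have ae: "AE x in FA. \<forall>b. x$b \<ge> 0" using fA(1) unfolding feasible_def by auto
  have "AE x in FA. (\<integral>y. fw w q p x y \<partial>stratB w q p D) \<le> K * (\<Sum>b\<in>UNIV. x$b)"
    using ae
  proof (rule eventually_mono)
    fix x :: "real^'a" assume x: "\<forall>b. x$b \<ge> 0"
    have "(\<integral>y. fw w q p x y \<partial>stratB w q p D) = (\<Sum>b\<in>UNIV. w$b * measure U {..< x$b / (2 * vb w D b)})"
      by (rule innerB[OF q])
    also have "\<dots> \<le> (\<Sum>b\<in>UNIV. w$b * (x$b / (2 * vb w D b)))"
      using x q vb_pos[OF q(3,2)] by (intro sum_mono mult_left_mono meas_A_b) (auto intro: less_imp_le)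
    also have "\<dots> = (\<Sum>b\<in>UNIV. K * x$b)"
      unfolding K_def using w_v[OF q(3,2)] by simp
    also have "\<dots> = K * (\<Sum>b\<in>UNIV. x$b)" by (simp add: sum_distrib_left)
    finally show "(\<integral>y. fw w q p x y \<partial>stratB w q p D) \<le> K * (\<Sum>b\<in>UNIV. x$b)" .
  qed
  then have "(\<integral>x. (\<integral>y. fw w q p x y \<partial>stratB w q p D) \<partial>FA) \<le> (\<integral>x. K * (\<Sum>b\<in>UNIV. x$b) \<partial>FA)"
    by (intro integral_mono_AE int ints)
  also have "\<dots> = K * (\<integral>x. (\<Sum>b\<in>UNIV. x$b) \<partial>FA)" by simp
  also have "\<dots> \<le> K * RA" using feasible_int(2)[OF fA] K0 by (intro mult_left_mono) auto
  also have "K * RA = (\<Sum>b\<in>UNIV. w$b) * RA / (2*D)" unfolding K_def by simp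
  finally show ?thesis using pf by simp
qed

lemma B_side:
  assumes q: "q > 0" "D > 0" "\<forall>b. w$b > 0" and c: "0 < c" "c < 1"
    and cond: "\<forall>b. c * p$b / (2 * vb w D b) \<le> 1 - c"
    and P: "(\<Sum>b\<in>UNIV. p$b) = P" "D = q*RB - P"
    and fA: "feasible RA (stratA w D c)" and fB: "feasible RB FB" "RB \<ge> 0"
  shows "payoffA w q p (stratA w D c) FB \<ge> (\<Sum>b\<in>UNIV. w$b) * c / 2"
proof -
  define W where "W = (\<Sum>b\<in>UNIV. w$b)"
  define K where "K = W / (2*D)"
  have K0: "K \<ge> 0" unfolding K_def W_def using q by (intro divide_nonneg_pos sum_nonneg) (auto intro: less_imp_le)
  interpret FB: prob_space FB using fB(1) unfolding feasible_def by auto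
  have pf: "payoffA w q p (stratA w D c) FB = (\<integral>y. (\<integral>x. fw w q p x y \<partial>stratA w D c) \<partial>FB)"
    by (rule payoff_fubini(2)[OF fA fB(1)])
  have int: "integrable FB (\<lambda>y. \<integral>x. fw w q p x y \<partial>stratA w D c)"
    by (rule payoff_fubini(4)[OF fA fB(1)])
  have intL: "integrable FB (\<lambda>y. c*W - c*K*(q * (\<Sum>b\<in>UNIV. y$b) - P))"
    using feasible_int(1)[OF fB] by simp
  have ae: "AE y in FB. \<forall>b. y$b \<ge> 0" using fB(1) unfolding feasible_def by auto
  have "AE y in FB. c*W - c*K*(q * (\<Sum>b\<in>UNIV. y$b) - P) \<le> (\<integral>x. fw w q p x y \<partial>stratA w D c)"
    using ae
  proof (rule eventually_mono)
    fix y :: "real^'a" assume y: "\<forall>b. y$b \<ge> 0"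
    have "c*W - c*K*(q * (\<Sum>b\<in>UNIV. y$b) - P) = (\<Sum>b\<in>UNIV. c * w$b - c * (K * (q * y$b - p$b)))"
      unfolding W_def P(1)[symmetric] by (simp add: sum_subtractf sum_distrib_left sum.distrib algebra_simps)
    also have "\<dots> = (\<Sum>b\<in>UNIV. w$b * (c * (1 - (q * y$b - p$b)/(2 * vb w D b))))"
    proof (rule sum.cong[OF refl])
      fix b
      have e: "w$b * ((q * y$b - p$b) / (2 * vb w D b)) = K * (q * y$b - p$b)"
        using w_v[OF q(3,2)] unfolding K_def W_def by simp
      have "w$b * (c * (1 - (q * y$b - p$b)/(2 * vb w D b))) = c * w$b - c * (w$b * ((q * y$b - p$b) / (2 * vb w D b)))"
        by (simp add: algebra_simps)
      then show "c * w$b - c * (K * (q * y$b - p$b)) = w$b * (c * (1 - (q * y$b - p$b)/(2 * vb w D b)))"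
        using e by (simp only:)
    qed
    also have "\<dots> \<le> (\<Sum>b\<in>UNIV. w$b * measure U {s. (2 * vb w D b / c) * max 0 (s - (1-c)) + p$b > q * y$b})"
      using y q c cond vb_pos[OF q(3,2)] by (intro sum_mono mult_left_mono meas_B_b) (auto intro: less_imp_le)
    also have "\<dots> = (\<integral>x. fw w q p x y \<partial>stratA w D c)"
      by (rule innerA[OF q, symmetric])
    finally show "c*W - c*K*(q * (\<Sum>b\<in>UNIV. y$b) - P) \<le> (\<integral>x. fw w q p x y \<partial>stratA w D c)" .
  qed
  then have le1: "(\<integral>y. c*W - c*K*(q * (\<Sum>b\<in>UNIV. y$b) - P) \<partial>FB) \<le> (\<integral>y. (\<integral>x. fw w q p x y \<partial>stratA w D c) \<partial>FB)"
    by (intro integral_mono_AE int intL)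
  define E where "E = (\<integral>y. (\<Sum>b\<in>UNIV. y$b) \<partial>FB)"
  have eq2: "(\<integral>y. c*W - c*K*(q * (\<Sum>b\<in>UNIV. y$b) - P) \<partial>FB) = c*W - c*K*(q * E - P)"
    unfolding E_def using feasible_int(1)[OF fB] by (simp add: FB.prob_space)
  have le3: "c*K*(q * E) \<le> c*K*(q*RB)"
    unfolding E_def using feasible_int(2)[OF fB] K0 c q by (intro mult_left_mono) auto
  have "c*K*D = W * c / 2" unfolding K_def using q by (simp add: field_simps)
  then have eq4: "c*K*(q*RB - P) = W * c / 2" using P(2) by simp
  have x1: "c*K*(q * E - P) = c*K*(q * E) - c*K*P" by (simp add: algebra_simps)
  have x2: "c*K*(q * RB - P) = c*K*(q * RB) - c*K*P" by (simp add: algebra_simps)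
  have "W * c / 2 \<le> payoffA w q p (stratA w D c) FB"
    using le1 eq2 le3 eq4 x1 x2 pf mult.commute[of c W] by linarith
  then show ?thesis unfolding W_def .
qed



lemma piA_eq:
  assumes eq: "is_equilibrium w q p RA RB FA FB"
  shows "piA w q p RA RB = payoffA w q p FA FB"
  unfolding piA_def
proof (rule the_equality)
  show "\<exists>FA' FB'. is_equilibrium w q p RA RB FA' FB' \<and> payoffA w q p FA FB = payoffA w q p FA' FB'"
    using eq by blast
  fix v assume "\<exists>FA2 FB2. is_equilibrium w q p RA RB FA2 FB2 \<and> v = payoffA w q p FA2 FB2"
  then obtain FA2 FB2 where eq2: "is_equilibrium w q p RA RB FA2 FB2" and v: "v = payoffA w q p FA2 FB2" by blast
  have "payoffA w q p FA FB2 \<le> payoffA w q p FA2 FB2" using eq eq2 unfolding is_equilibrium_def by blast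
  moreover have "payoffA w q p FA FB2 \<ge> payoffA w q p FA FB" using eq eq2 unfolding is_equilibrium_def by blast
  moreover have "payoffA w q p FA2 FB \<le> payoffA w q p FA FB" using eq eq2 unfolding is_equilibrium_def by blast
  moreover have "payoffA w q p FA2 FB \<ge> payoffA w q p FA2 FB2" using eq eq2 unfolding is_equilibrium_def by blast
  ultimately show "v = payoffA w q p FA FB" using v by linarith
qed

lemma max_ge: "(f::'n::finite \<Rightarrow> real) b \<le> (MAX b. f b)"
  by (rule Max_ge) auto

lemma cond_consequence:
  fixes w p :: "real^'n"
  assumes "P > 0" "RA > 0" "\<forall>b. w$b > 0" "\<forall>b. p$b \<ge> 0" "cond_ineq w q P RA RB p"
  shows "q*RB - P > RA" "\<And>b. RA * (\<Sum>b\<in>UNIV. w$b) * (p$b / w$b) / 2 < (q*RB - P) * (q*RB - P - RA)"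
proof -
  define W where "W = (\<Sum>b\<in>UNIV. w$b)"
  define D where "D = q*RB - P"
  define m where "m = (MAX b. p$b / w$b)"
  have W0: "W > 0" unfolding W_def using assms by (intro sum_pos) auto
  have m0: "m \<ge> 0" unfolding m_def using max_ge[of "\<lambda>b. p$b / w$b"] assms
    by (meson divide_nonneg_pos order_trans)
  define S where "S = sqrt (1 + 2 * W / RA * m)"
  have arg: "1 + 2 * W / RA * m \<ge> 1" using W0 m0 assms by simp
  have S1: "S \<ge> 1" unfolding S_def using arg by simp
  have S2: "S^2 = 1 + 2 * W / RA * m" unfolding S_def using arg by simp
  have c: "D > RA / 2 * (1 + S)" using assms(5) unfolding cond_ineq_def D_def S_def W_def m_def by simp
  then have c2: "2*D - RA > RA * S" using assms by (simp add: field_simps)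
  then show "q*RB - P > RA" using S1 assms unfolding D_def
    by (smt (verit) mult_le_cancel_left1)
  have "RA * S \<ge> 0" using S1 assms by simp
  then have "(RA * S)^2 < (2*D - RA)^2" using c2 by (intro power_strict_mono) auto
  moreover have "(RA * S)^2 = RA^2 + 2 * W * RA * m" using S2 assms by (simp add: power_mult_distrib field_simps power2_eq_square)
  ultimately have "2 * W * RA * m < 4 * (D * (D - RA))" by (simp add: power2_eq_square algebra_simps)
  moreover fix b
  have "p$b / w$b \<le> m" unfolding m_def by (rule max_ge)
  then have "W * RA * (p$b / w$b) \<le> W * RA * m" using W0 assms by (intro mult_left_mono) auto
  ultimately show "RA * (\<Sum>b\<in>UNIV. w$b) * (p$b / w$b) / 2 < (q*RB - P) * (q*RB - P - RA)"
    unfolding W_def[symmetric] D_def[symmetric] by (simp add: algebra_simps)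
qed

lemma cond_B:
  fixes w p :: "real^'n"
  assumes "\<forall>b. w$b > 0" "D > 0" "RA > 0" "RA * (\<Sum>b\<in>UNIV. w$b) * (p$b / w$b) / 2 < D * (D - RA)"
  shows "(RA/D) * p$b / (2 * vb w D b) \<le> 1 - RA/D"
proof -
  define W where "W = (\<Sum>b\<in>UNIV. w$b)"
  have W0: "W > 0" unfolding W_def using assms by (intro sum_pos) auto
  have wb: "w$b > 0" using assms by auto
  have e1: "(RA/D) * p$b / (2 * vb w D b) = (RA * W * (p$b / w$b) / 2) / D^2"
    unfolding vb_def W_def[symmetric] using W0 wb assms(2) by (simp add: field_simps power2_eq_square)
  have e2: "1 - RA/D = (D * (D - RA)) / D^2" using assms(2) by (simp add: field_simps power2_eq_square)
  show ?thesis unfolding e1 e2 using assms(2,4) unfolding W_def[symmetric]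
    by (intro divide_right_mono) auto
qed

theorem mainTheorem5:
  fixes w p :: "real^'n" and P RA RB q :: real
  assumes "P > 0" and "RA > 0" and "RB > 0" and "q > 0"
    and "\<forall>b. w$b > 0"
  shows "(p \<in> preAlloc P \<and> cond_ineq w q P RA RB p \<longrightarrow>
           piA w q p RA RB = (\<Sum>b\<in>UNIV. w$b) * RA / (2 * (q * RB - P)))
       \<and> ((\<exists>p'\<in>preAlloc P. cond_ineq w q P RA RB p') \<longrightarrow>
           cond_ineq w q P RA RB ((P / (\<Sum>b\<in>UNIV. w$b)) *\<^sub>R w))"
proof (intro conjI impI)
  define W where "W = (\<Sum>b\<in>UNIV. w$b)"
  have W0: "W > 0" unfolding W_def using assms by (intro sum_pos) auto
  {
    assume h: "p \<in> preAlloc P \<and> cond_ineq w q P RA RB p"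
    have pn: "\<forall>b. p$b \<ge> 0" and ps: "(\<Sum>b\<in>UNIV. p$b) = P" using h unfolding preAlloc_def by auto
    define D where "D = q*RB - P"
    define c where "c = RA / D"
    have DRA: "D > RA" unfolding D_def using cond_consequence(1)[OF assms(1,2,5) pn] h by blast
    have D0: "D > 0" using DRA assms by simp
    have c0: "0 < c" "c < 1" unfolding c_def using DRA assms D0 by auto
    have RAc: "RA = D * c" unfolding c_def using D0 by simp
    have condb: "\<forall>b. c * p$b / (2 * vb w D b) \<le> 1 - c"
      unfolding c_def using cond_B[OF assms(5) D0 assms(2)] cond_consequence(2)[OF assms(1,2,5) pn] h
      unfolding D_def by blast
    have fA: "feasible RA (stratA w D c)" by (rule feasible_A[OF c0 D0 assms(5) RAc])
    have fB: "feasible RB (stratB w q p D)" by (rule feasible_B[OF assms(4) pn ps D_def D0 assms(5)])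
    have up: "\<And>FA' :: (real^'n) measure. feasible RA FA' \<Longrightarrow> payoffA w q p FA' (stratB w q p D) \<le> W * RA / (2*D)"
      unfolding W_def using A_side[OF assms(4) D0 assms(5) _ _ fB] assms(2) by auto
    have lo: "\<And>FB' :: (real^'n) measure. feasible RB FB' \<Longrightarrow> payoffA w q p (stratA w D c) FB' \<ge> W * RA / (2*D)"
    proof -
      fix FB' :: "(real^'n) measure" assume "feasible RB FB'"
      then have "payoffA w q p (stratA w D c) FB' \<ge> W * c / 2"
        unfolding W_def using B_side[OF assms(4) D0 assms(5) c0 condb ps D_def fA] assms(3) by auto
      moreover have "W * c / 2 = W * RA / (2*D)" unfolding c_def by simp
      ultimately show "payoffA w q p (stratA w D c) FB' \<ge> W * RA / (2*D)" by simp
    qed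
    have val: "payoffA w q p (stratA w D c) (stratB w q p D) = W * RA / (2*D)"
      using up[OF fA] lo[OF fB] by linarith
    have "is_equilibrium w q p RA RB (stratA w D c) (stratB w q p D)"
      unfolding is_equilibrium_def using fA fB up lo val by auto
    then have "piA w q p RA RB = payoffA w q p (stratA w D c) (stratB w q p D)" by (rule piA_eq)
    then show "piA w q p RA RB = (\<Sum>b\<in>UNIV. w$b) * RA / (2 * (q * RB - P))"
      using val unfolding W_def D_def by simp
  }
  {
    assume "\<exists>p'\<in>preAlloc P. cond_ineq w q P RA RB p'"
    then obtain p' where p': "p' \<in> preAlloc P" "cond_ineq w q P RA RB p'" by blast
    have pn: "\<forall>b. p'$b \<ge> 0" and ps: "(\<Sum>b\<in>UNIV. p'$b) = P" using p' unfolding preAlloc_def by auto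
    define m where "m = (MAX b. p'$b / w$b)"
    have "P \<le> m * W"
    proof -
      have "P = (\<Sum>b\<in>UNIV. (p'$b / w$b) * w$b)" 
      proof -
        have "\<And>b. (p'$b / w$b) * w$b = p'$b" using assms(5) by (metis less_irrefl nonzero_eq_divide_eq)
        then show ?thesis using ps by simp
      qed
      also have "\<dots> \<le> (\<Sum>b\<in>UNIV. m * w$b)" unfolding m_def using assms(5)
        by (intro sum_mono mult_right_mono max_ge) (auto intro: less_imp_le)
      also have "\<dots> = m * W" unfolding W_def by (simp add: sum_distrib_left)
      finally show ?thesis .
    qed
    then have Pm: "P / W \<le> m" using W0 by (simp add: divide_le_eq)
    have mx: "(MAX b. ((P / W) *\<^sub>R w)$b / w$b) = P / W"
    proof -
      have "(\<lambda>b. ((P / W) *\<^sub>R w)$b / w$b) = (\<lambda>b. P / W)"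
        using assms(5) by (auto intro!: ext simp: less_imp_neq[symmetric])
      then have "(MAX b. ((P / W) *\<^sub>R w)$b / w$b) = (MAX b::'n. P / W)" by (rule arg_cong)
      also have "\<dots> = P / W" by simp
      finally show ?thesis .
    qed
    have "sqrt (1 + 2 * W / RA * (P/W)) \<le> sqrt (1 + 2 * W / RA * m)"
      using Pm W0 assms(2) by (intro real_sqrt_le_mono add_left_mono mult_left_mono) auto
    then have "RA/2 * (1 + sqrt (1 + 2 * W / RA * (P/W))) \<le> RA/2 * (1 + sqrt (1 + 2 * W / RA * m))"
      using assms(2) by (intro mult_left_mono) auto
    moreover have "q * RB - P > RA/2 * (1 + sqrt (1 + 2 * W / RA * m))"
      using p'(2) unfolding cond_ineq_def W_def[symmetric] m_def[symmetric] .
    ultimately show "cond_ineq w q P RA RB ((P / (\<Sum>b\<in>UNIV. w$b)) *\<^sub>R w)"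
      unfolding cond_ineq_def W_def[symmetric] mx by linarith
  }
qed

end
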